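(* Let $\mathbf{r}\in\mathbb{Q}^n$, let $\le_m$ be a monomial order and let $<_{\mathbf{r},m}$ be the associated term order. Let $T$ be a finite set of terms of $K[\mathbf{X}]$. Then there exists $\mathbf{s}\in\mathbb{Q}^n$ such that for all $t_1,t_2\in T$, $$t_1>_{\mathbf{r},m}t_2 \iff \mathrm{val}_{\mathbf{s}}(t_1)<\mathrm{val}_{\mathbf{s}}(t_2).$$ In particular, if $F$ is a finite set of polynomials in $K[\mathbf{X}]$, every equivalence class of term orders (of the form $<_{\mathbf{r},m}$) with respect to $F$ contains a term order $<_{\mathbf{s},m}$ such that $\mathrm{LT}_{\mathbf{s},m}(f)=\mathrm{init}_{\mathbf{s}}(f)$ for all $f\in F$.
   Context: $K$ is a field complete for a discrete valuation $\mathrm{val}$. A term is $c\mathbf{X}^\alpha$ with $c\in K^\times$, $\alpha\in\mathbb{N}^n$. For $\mathbf{s}\in\mathbb{Q}^n$, the Gauss valuation of a term is $\mathrm{val}_{\mathbf{s}}(c\mathbf{X}^\alpha)=\mathrm{val}(c)-\mathbf{s}\cdot\alpha$, and of a polynomial $f$ it is the minimum over its terms. Given a monomial order $\le_m$, $a\mathbf{X}^\alpha<_{\mathbf{r},m}b\mathbf{X}^\beta$ iff $\mathrm{val}_{\mathbf{r}}(a\mathbf{X}^\alpha)>\mathrm{val}_{\mathbf{r}}(b\mathbf{X}^\beta)$, or they are equal and $\mathbf{X}^\alpha<_m\mathbf{X}^\beta$; $\mathrm{LT}_{\mathbf{r},m}(f)$ is the maximal term of $f$. The initial part $\mathrm{init}_{\mathbf{s}}(f)$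 is the sum of the terms of $f$ whose Gauss valuation $\mathrm{val}_{\mathbf{s}}$ equals $\mathrm{val}_{\mathbf{s}}(f)$. Two term orders $<_1,<_2$ are equivalent with respect to a finite set $F$ if $\{\mathrm{LT}_{<_1}(f):f\in F\}=\{\mathrm{LT}_{<_2}(f):f\in F\}$. *)

theory Defs
  imports Complex_Main "HOL-Library.Poly_Mapping"
begin

text \<open>Discrete (normalised) valuation on a field: val is defined on nonzero
elements (val 0 = infinity is never used), multiplicative, ultrametric and
surjective onto the integers.\<close>
definition discrete_valuation :: "('k::field \<Rightarrow> int) \<Rightarrow> bool" where
  "discrete_valuation val \<longleftrightarrow>
     (\<forall>x y. x \<noteq> 0 \<and> y \<noteq> 0 \<longrightarrow> val (x * y) = val x + val y) \<and>
     (\<forall>x y. x \<noteq> 0 \<and> y \<noteq> 0 \<and> x + y \<noteq> 0 \<longrightarrow> min (val x) (val y) \<le> val (x + y)) \<and>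
     val ` (UNIV - {0}) = UNIV"

text \<open>Completeness for the valuation: valuation-Cauchy sequences converge.
(val (x - y) \<ge> N is read as true when x = y, i.e. val 0 = infinity.)\<close>
definition val_complete :: "('k::field \<Rightarrow> int) \<Rightarrow> bool" where
  "val_complete val \<longleftrightarrow>
     (\<forall>x :: nat \<Rightarrow> 'k.
        (\<forall>N::int. \<exists>M. \<forall>i\<ge>M. \<forall>j\<ge>M. x i = x j \<or> N \<le> val (x i - x j)) \<longrightarrow>
        (\<exists>L. \<forall>N::int. \<exists>M. \<forall>i\<ge>M. x i = L \<or> N \<le> val (x i - L)))"

definition monomials :: "nat \<Rightarrow> (nat \<Rightarrow>\<^sub>0 nat) set" where
  "monomials n = {\<alpha>. Poly_Mapping.keys \<alpha> \<subseteq> {..<n}}"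

definition polys :: "nat \<Rightarrow> ((nat \<Rightarrow>\<^sub>0 nat) \<Rightarrow>\<^sub>0 'k::field) set" where
  "polys n = {f. Poly_Mapping.keys f \<subseteq> monomials n}"

text \<open>Terms c X^alpha with c nonzero, represented as pairs (c, alpha).\<close>
definition terms :: "nat \<Rightarrow> ('k::field \<times> (nat \<Rightarrow>\<^sub>0 nat)) set" where
  "terms n = {(c, \<alpha>). c \<noteq> 0 \<and> \<alpha> \<in> monomials n}"

definition monomial_order :: "nat \<Rightarrow> ((nat \<Rightarrow>\<^sub>0 nat) \<Rightarrow> (nat \<Rightarrow>\<^sub>0 nat) \<Rightarrow> bool) \<Rightarrow> bool" where
  "monomial_order n le \<longleftrightarrow>
     (\<forall>\<alpha>\<in>monomials n. le \<alpha> \<alpha>) \<and>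
     (\<forall>\<alpha>\<in>monomials n. \<forall>\<beta>\<in>monomials n. le \<alpha> \<beta> \<and> le \<beta> \<alpha> \<longrightarrow> \<alpha> = \<beta>) \<and>
     (\<forall>\<alpha>\<in>monomials n. \<forall>\<beta>\<in>monomials n. \<forall>\<gamma>\<in>monomials n. le \<alpha> \<beta> \<and> le \<beta> \<gamma> \<longrightarrow> le \<alpha> \<gamma>) \<and>
     (\<forall>\<alpha>\<in>monomials n. \<forall>\<beta>\<in>monomials n. le \<alpha> \<beta> \<or> le \<beta> \<alpha>) \<and>
     (\<forall>\<alpha>\<in>monomials n. le 0 \<alpha>) \<and>
     (\<forall>\<alpha>\<in>monomials n. \<forall>\<beta>\<in>monomials n. \<forall>\<gamma>\<in>monomials n. le \<alpha> \<beta> \<longrightarrow> le (\<alpha> + \<gamma>) (\<beta> + \<gamma>))"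

definition gauss_val_term :: "('k \<Rightarrow> int) \<Rightarrow> nat \<Rightarrow> (nat \<Rightarrow> rat) \<Rightarrow> 'k \<times> (nat \<Rightarrow>\<^sub>0 nat) \<Rightarrow> rat" where
  "gauss_val_term val n s t = of_int (val (fst t)) - (\<Sum>i<n. s i * of_nat (Poly_Mapping.lookup (snd t) i))"

definition gauss_val :: "('k::field \<Rightarrow> int) \<Rightarrow> nat \<Rightarrow> (nat \<Rightarrow> rat) \<Rightarrow> ((nat \<Rightarrow>\<^sub>0 nat) \<Rightarrow>\<^sub>0 'k) \<Rightarrow> rat" where
  "gauss_val val n s f = Min ((\<lambda>\<alpha>. gauss_val_term val n s (Poly_Mapping.lookup f \<alpha>, \<alpha>)) ` Poly_Mapping.keys f)"

definition term_less :: "('k \<Rightarrow> int) \<Rightarrow> nat \<Rightarrow> (nat \<Rightarrow> rat) \<Rightarrow> ((nat \<Rightarrow>\<^sub>0 nat) \<Rightarrow> (nat \<Rightarrow>\<^sub>0 nat) \<Rightarrow> bool)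
     \<Rightarrow> 'k \<times> (nat \<Rightarrow>\<^sub>0 nat) \<Rightarrow> 'k \<times> (nat \<Rightarrow>\<^sub>0 nat) \<Rightarrow> bool" where
  "term_less val n r le t1 t2 \<longleftrightarrow>
     gauss_val_term val n r t1 > gauss_val_term val n r t2 \<or>
     (gauss_val_term val n r t1 = gauss_val_term val n r t2 \<and> le (snd t1) (snd t2) \<and> snd t1 \<noteq> snd t2)"

definition leading_term :: "('k::field \<Rightarrow> int) \<Rightarrow> nat \<Rightarrow> (nat \<Rightarrow> rat) \<Rightarrow> ((nat \<Rightarrow>\<^sub>0 nat) \<Rightarrow> (nat \<Rightarrow>\<^sub>0 nat) \<Rightarrow> bool)
     \<Rightarrow> ((nat \<Rightarrow>\<^sub>0 nat) \<Rightarrow>\<^sub>0 'k) \<Rightarrow> ((nat \<Rightarrow>\<^sub>0 nat) \<Rightarrow>\<^sub>0 'k)" where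
  "leading_term val n r le f =
     (if f = 0 then 0 else
      (let \<alpha> = (THE \<alpha>. \<alpha> \<in> Poly_Mapping.keys f \<and>
                 (\<forall>\<beta>\<in>Poly_Mapping.keys f. \<beta> \<noteq> \<alpha> \<longrightarrow> term_less val n r le (Poly_Mapping.lookup f \<beta>, \<beta>) (Poly_Mapping.lookup f \<alpha>, \<alpha>)))
       in Poly_Mapping.single \<alpha> (Poly_Mapping.lookup f \<alpha>)))"

definition init_part :: "('k::field \<Rightarrow> int) \<Rightarrow> nat \<Rightarrow> (nat \<Rightarrow> rat) \<Rightarrow> ((nat \<Rightarrow>\<^sub>0 nat) \<Rightarrow>\<^sub>0 'k) \<Rightarrow> ((nat \<Rightarrow>\<^sub>0 nat) \<Rightarrow>\<^sub>0 'k)" where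
  "init_part val n s f =
     (\<Sum>\<alpha>\<in>{\<alpha>\<in>Poly_Mapping.keys f. gauss_val_term val n s (Poly_Mapping.lookup f \<alpha>, \<alpha>) = gauss_val val n s f}.
        Poly_Mapping.single \<alpha> (Poly_Mapping.lookup f \<alpha>))"

end

theory Submission
  imports Defs
begin

inductive_set pc :: "(nat \<Rightarrow> int) set \<Rightarrow> (nat \<Rightarrow> int) set" for D where
  pc_base: "d \<in> D \<Longrightarrow> d \<in> pc D"
| pc_add: "x \<in> pc D \<Longrightarrow> y \<in> pc D \<Longrightarrow> (\<lambda>i. x i + y i) \<in> pc D"

lemma pc_scale_nat: "d \<in> pc D \<Longrightarrow> (\<lambda>i. int (Suc k) * d i) \<in> pc D"
proof (induction k)
  case 0 then show ?case by simp
next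
  case (Suc k)
  have "(\<lambda>i. int (Suc (Suc k)) * d i) = (\<lambda>i. int (Suc k) * d i + d i)"
    by (auto simp: algebra_simps)
  then show ?case using Suc pc_add by metis
qed

lemma pc_scale: assumes "d \<in> pc D" "(k::int) > 0" shows "(\<lambda>i. k * d i) \<in> pc D"
proof -
  obtain m where "k = int (Suc m)" using assms(2)
    by (metis gr0_implies_Suc pos_int_cases)
  then show ?thesis using pc_scale_nat[OF assms(1)] by simp
qed

lemma pc_mono: assumes "D' \<subseteq> pc D" "x \<in> pc D'" shows "x \<in> pc D"
  using assms(2) by induction (use assms(1) in \<open>auto intro: pc_add\<close>)

lemma pc_coord0: assumes "\<forall>d\<in>D. d j = 0" "x \<in> pc D" shows "x j = 0"
  using assms(2) by induction (use assms(1) in auto)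

lemma interp:
  fixes X Y :: "rat set"
  assumes "finite X" "finite Y" "\<forall>x\<in>X. \<forall>y\<in>Y. x < y"
  shows "\<exists>t. (\<forall>x\<in>X. x < t) \<and> (\<forall>y\<in>Y. t < y)"
proof (cases "X = {}")
  case True
  show ?thesis
  proof (cases "Y = {}")
    case True then show ?thesis using \<open>X = {}\<close> by auto
  next
    case False
    have "\<forall>y\<in>Y. Min Y - 1 < y"
    proof
      fix y assume "y \<in> Y" then have "Min Y \<le> y" using assms by auto
      then show "Min Y - 1 < y" by linarith
    qed
    then show ?thesis using True by auto
  qed
next
  case False
  show ?thesis
  proof (cases "Y = {}")
    case True
    have "\<forall>x\<in>X. x < Max X + 1"
    proof
      fix x assume "x \<in> X" then have "x \<le> Max X" using assms by auto
      then show "x < Max X + 1" by linarith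
    qed
    then show ?thesis using True by auto
  next
    case F2: False
    have "Max X \<in> X" "Min Y \<in> Y" using False F2 assms by auto
    then have lt: "Max X < Min Y" using assms by auto
    show ?thesis
    proof (intro exI[of _ "(Max X + Min Y) / 2"] conjI ballI)
      fix x assume "x \<in> X" then have "x \<le> Max X" using assms by auto
      then show "x < (Max X + Min Y) / 2" using lt by (simp add: field_simps)
    next
      fix y assume "y \<in> Y" then have "Min Y \<le> y" using assms by auto
      then show "(Max X + Min Y) / 2 < y" using lt by (simp add: field_simps)
    qed
  qed
qed

lemma gordan:
  "finite D \<Longrightarrow> (\<exists>w::nat\<Rightarrow>rat. \<forall>d\<in>D. 0 < (\<Sum>i<n. w i * of_int (d i)))
     \<or> (\<exists>x\<in>pc D. \<forall>i<n. x i = 0)"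
proof (induction n arbitrary: D)
  case 0
  then show ?case
    by (cases "D = {}") (auto intro: pc_base)
next
  case (Suc n)
  define comb where "comb p q = (\<lambda>i. (- q n) * p i + p n * q i)" for p q :: "nat \<Rightarrow> int"
  define Dp where "Dp = {d\<in>D. d n > 0}"
  define Dm where "Dm = {d\<in>D. d n < 0}"
  define D' where "D' = {d\<in>D. d n = 0} \<union> (\<lambda>(p,q). comb p q) ` (Dp \<times> Dm)"
  have fin: "finite D'" unfolding D'_def Dp_def Dm_def using Suc.prems by auto
  from Suc.IH[OF fin] show ?case
  proof
    assume "\<exists>x\<in>pc D'. \<forall>i<n. x i = 0"
    then obtain x where x: "x \<in> pc D'" "\<forall>i<n. x i = 0" by blast
    have sub: "D' \<subseteq> pc D"
    proof
      fix v assume "v \<in> D'"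
      then consider "v \<in> D" | p q where "p \<in> Dp" "q \<in> Dm" "v = comb p q"
        unfolding D'_def by auto
      then show "v \<in> pc D"
      proof cases
        case 1 then show ?thesis by (rule pc_base)
      next
        case 2
        have a: "(\<lambda>i. (- q n) * p i) \<in> pc D"
          using 2 by (intro pc_scale pc_base) (auto simp: Dp_def Dm_def)
        have b: "(\<lambda>i. p n * q i) \<in> pc D"
          using 2 by (intro pc_scale pc_base) (auto simp: Dp_def Dm_def)
        show ?thesis using pc_add[OF a b] 2 by (simp add: comb_def)
      qed
    qed
    have "\<forall>d\<in>D'. d n = 0" unfolding D'_def comb_def by auto
    then have "x n = 0" using pc_coord0 x(1) by blast
    then have "\<forall>i<Suc n. x i = 0" using x(2) less_Suc_eq by auto
    then show ?thesis using pc_mono[OF sub x(1)] by blast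
  next
    assume "\<exists>w::nat\<Rightarrow>rat. \<forall>d\<in>D'. 0 < (\<Sum>i<n. w i * of_int (d i))"
    then obtain w' :: "nat \<Rightarrow> rat" where w': "\<forall>d\<in>D'. 0 < (\<Sum>i<n. w' i * of_int (d i))" by blast
    define A where "A d = (\<Sum>i<n. w' i * of_int (d i))" for d :: "nat \<Rightarrow> int"
    have Acomb: "A (comb p q) = of_int (- q n) * A p + of_int (p n) * A q" for p q
    proof -
      have "A (comb p q) = (\<Sum>i<n. of_int (- q n) * (w' i * of_int (p i)) + of_int (p n) * (w' i * of_int (q i)))"
        unfolding A_def comb_def by (intro sum.cong) (auto simp: algebra_simps)
      also have "\<dots> = (\<Sum>i<n. of_int (- q n) * (w' i * of_int (p i))) + (\<Sum>i<n. of_int (p n) * (w' i * of_int (q i)))"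
        by (rule sum.distrib)
      also have "\<dots> = of_int (- q n) * A p + of_int (p n) * A q"
        unfolding A_def sum_distrib_left ..
      finally show ?thesis .
    qed
    define X where "X = (\<lambda>p. - A p / of_int (p n)) ` Dp"
    define Y where "Y = (\<lambda>q. A q / of_int (- q n)) ` Dm"
    have "\<forall>x\<in>X. \<forall>y\<in>Y. x < y"
    proof (intro ballI)
      fix x y assume "x \<in> X" "y \<in> Y"
      then obtain p q where pq: "p \<in> Dp" "q \<in> Dm" "x = - A p / of_int (p n)" "y = A q / of_int (- q n)"
        unfolding X_def Y_def by auto
      have "comb p q \<in> D'" using pq unfolding D'_def by auto
      then have pos: "0 < of_int (- q n) * A p + of_int (p n) * A q" using w' Acomb A_def by metis
      have pn: "(0::rat) < of_int (p n)" and qn: "(0::rat) < of_int (- q n)"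
        using pq by (auto simp: Dp_def Dm_def)
      show "x < y" unfolding pq(3,4) using pos pn qn
        by (simp add: field_simps)
    qed
    moreover have "finite X" "finite Y" unfolding X_def Y_def Dp_def Dm_def using Suc.prems by auto
    ultimately have "\<exists>t. (\<forall>x\<in>X. x < t) \<and> (\<forall>y\<in>Y. t < y)" by (intro interp)
    then obtain t where t: "\<forall>x\<in>X. x < t" "\<forall>y\<in>Y. t < y" by blast
    define w where "w = w'(n := t)"
    have sumw: "(\<Sum>i<Suc n. w i * of_int (d i)) = A d + t * of_int (d n)" for d
    proof -
      have "(\<Sum>i<Suc n. w i * of_int (d i)) = (\<Sum>i<n. w i * of_int (d i)) + w n * of_int (d n)"
        by simp
      also have "(\<Sum>i<n. w i * of_int (d i)) = A d" unfolding A_def w_def by (intro sum.cong) auto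
      finally show ?thesis by (simp add: w_def)
    qed
    have "\<forall>d\<in>D. 0 < (\<Sum>i<Suc n. w i * of_int (d i))"
    proof
      fix d assume d: "d \<in> D"
      consider "d n = 0" | "d n > 0" | "d n < 0" by linarith
      then show "0 < (\<Sum>i<Suc n. w i * of_int (d i))"
      proof cases
        case 1
        then have "d \<in> D'" using d unfolding D'_def by auto
        then show ?thesis using w' 1 unfolding sumw A_def by simp
      next
        case 2
        then have "- A d / of_int (d n) < t" using t d unfolding X_def Dp_def by auto
        then show ?thesis unfolding sumw using 2 by (simp add: field_simps)
      next
        case 3
        then have "t < A d / of_int (- d n)" using t d unfolding Y_def Dm_def by auto
        then show ?thesis unfolding sumw using 3 by (simp add: field_simps)
      qed
    qed
    then show ?thesis by blast
  qed
qed


definition vec :: "(nat \<Rightarrow>\<^sub>0 nat) \<Rightarrow> (nat \<Rightarrow>\<^sub>0 nat) \<Rightarrow> nat \<Rightarrow> int" where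
  "vec a b = (\<lambda>i. int (Poly_Mapping.lookup a i) - int (Poly_Mapping.lookup b i))"

lemma mono_add_mem: "a \<in> monomials n \<Longrightarrow> b \<in> monomials n \<Longrightarrow> a + b \<in> monomials n"
  unfolding monomials_def using keys_add[of a b] by auto

lemma strict_add:
  assumes mo: "monomial_order n le"
    and m: "a \<in> monomials n" "b \<in> monomials n" "c \<in> monomials n" "e \<in> monomials n"
    and ab: "le b a" "a \<noteq> b" and ce: "le e c" "c \<noteq> e"
  shows "le (b + e) (a + c) \<and> a + c \<noteq> b + e"
proof -
  have refl: "\<forall>x\<in>monomials n. le x x"
    and anti: "\<forall>x\<in>monomials n. \<forall>y\<in>monomials n. le x y \<and> le y x \<longrightarrow> x = y"
    and trans: "\<forall>x\<in>monomials n. \<forall>y\<in>monomials n. \<forall>z\<in>monomials n. le x y \<and> le y z \<longrightarrow> le x z"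
    and comp: "\<forall>x\<in>monomials n. \<forall>y\<in>monomials n. \<forall>z\<in>monomials n. le x y \<longrightarrow> le (x + z) (y + z)"
    using mo unfolding monomial_order_def by blast+
  have 1: "le (b + e) (a + e)" using comp m ab by blast
  have 2: "le (e + a) (c + a)" using comp m ce by blast
  then have 2: "le (a + e) (a + c)" by (simp add: add.commute)
  have M: "b + e \<in> monomials n" "a + e \<in> monomials n" "a + c \<in> monomials n"
    using m mono_add_mem by auto
  have le: "le (b + e) (a + c)" using trans M 1 2 by blast
  moreover have "a + c \<noteq> b + e"
  proof
    assume eq: "a + c = b + e"
    have "le (a + e) (b + e)" using 2 eq by simp
    then have "a + e = b + e" using anti M 1 by blast
    then show False using ab(2) by simp
  qed
  ultimately show ?thesis by blast
qed

lemma pc_vec: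
  assumes mo: "monomial_order n le" and S: "S \<subseteq> monomials n"
    and x: "x \<in> pc ((\<lambda>(a,b). vec a b) ` {(a,b)\<in>S\<times>S. le b a \<and> a \<noteq> b})"
  shows "\<exists>a b. a \<in> monomials n \<and> b \<in> monomials n \<and> le b a \<and> a \<noteq> b \<and> x = vec a b"
  using x
proof induction
  case (pc_base d) then show ?case using S by auto
next
  case (pc_add x y)
  then obtain a b c e where H: "a \<in> monomials n" "b \<in> monomials n" "le b a" "a \<noteq> b" "x = vec a b"
    "c \<in> monomials n" "e \<in> monomials n" "le e c" "c \<noteq> e" "y = vec c e" by blast
  have "le (b + e) (a + c) \<and> a + c \<noteq> b + e" using strict_add[OF mo] H by blast
  moreover have "(\<lambda>i. x i + y i) = vec (a + c) (b + e)"
    using H by (auto simp: vec_def lookup_add)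
  ultimately show ?case using H mono_add_mem by blast
qed

lemma weight:
  assumes mo: "monomial_order n le" and S: "S \<subseteq> monomials n" "finite S"
  shows "\<exists>w::nat\<Rightarrow>rat. \<forall>a\<in>S. \<forall>b\<in>S. le b a \<and> a \<noteq> b \<longrightarrow>
     (\<Sum>i<n. w i * of_nat (Poly_Mapping.lookup b i)) < (\<Sum>i<n. w i * of_nat (Poly_Mapping.lookup a i))"
proof -
  define D where "D = (\<lambda>(a,b). vec a b) ` {(a,b)\<in>S\<times>S. le b a \<and> a \<noteq> b}"
  have "finite {(a,b)\<in>S\<times>S. le b a \<and> a \<noteq> b}"
    by (rule finite_subset[of _ "S \<times> S"]) (use S in auto)
  then have "finite D" unfolding D_def by (rule finite_imageI)
  from gordan[OF this, of n] show ?thesis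
  proof
    assume "\<exists>x\<in>pc D. \<forall>i<n. x i = 0"
    then obtain x where x: "x \<in> pc D" "\<forall>i<n. x i = 0" by blast
    obtain a b where H: "a \<in> monomials n" "b \<in> monomials n" "le b a" "a \<noteq> b" "x = vec a b"
      using pc_vec[OF mo S(1)] x(1) unfolding D_def by blast
    have "a = b"
    proof (rule poly_mapping_eqI)
      fix k show "Poly_Mapping.lookup a k = Poly_Mapping.lookup b k"
      proof (cases "k < n")
        case True then show ?thesis using x(2) H(5) by (auto simp: vec_def)
      next
        case False
        then have "k \<notin> Poly_Mapping.keys a" "k \<notin> Poly_Mapping.keys b" using H(1,2) by (auto simp: monomials_def)
        then show ?thesis by (simp add: in_keys_iff)
      qed
    qed
    then show ?thesis using H by blast
  next
    assume "\<exists>w::nat\<Rightarrow>rat. \<forall>d\<in>D. 0 < (\<Sum>i<n. w i * of_int (d i))"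
    then obtain w :: "nat\<Rightarrow>rat" where w: "\<forall>d\<in>D. 0 < (\<Sum>i<n. w i * of_int (d i))" by blast
    have "(\<Sum>i<n. w i * of_nat (Poly_Mapping.lookup b i)) < (\<Sum>i<n. w i * of_nat (Poly_Mapping.lookup a i))"
      if "a \<in> S" "b \<in> S" "le b a" "a \<noteq> b" for a b
    proof -
      have "vec a b \<in> D" unfolding D_def using that by auto
      then have "0 < (\<Sum>i<n. w i * of_int (vec a b i))" using w by blast
      also have "(\<Sum>i<n. w i * of_int (vec a b i)) = (\<Sum>i<n. w i * of_nat (Poly_Mapping.lookup a i)) - (\<Sum>i<n. w i * of_nat (Poly_Mapping.lookup b i))"
        unfolding vec_def by (simp add: sum_subtractf[symmetric] algebra_simps)
      finally show ?thesis by simp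
    qed
    then show ?thesis by blast
  qed
qed


lemma part1:
  assumes mo: "monomial_order n le" and T: "finite T" "T \<subseteq> terms n"
  shows "\<exists>s. \<forall>t1\<in>T. \<forall>t2\<in>T. term_less val n r le t2 t1 \<longleftrightarrow>
            gauss_val_term val n s t1 < gauss_val_term val n s t2"
proof -
  have S: "snd ` T \<subseteq> monomials n" "finite (snd ` T)" using T by (auto simp: terms_def)
  obtain w :: "nat \<Rightarrow> rat" where w: "\<forall>a\<in>snd ` T. \<forall>b\<in>snd ` T. le b a \<and> a \<noteq> b \<longrightarrow>
     (\<Sum>i<n. w i * of_nat (Poly_Mapping.lookup b i)) < (\<Sum>i<n. w i * of_nat (Poly_Mapping.lookup a i))"
    using weight[OF mo S] by blast
  define W where "W a = (\<Sum>i<n. w i * of_nat (Poly_Mapping.lookup a i))" for a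
  have w': "\<And>a b. a \<in> snd ` T \<Longrightarrow> b \<in> snd ` T \<Longrightarrow> le b a \<Longrightarrow> a \<noteq> b \<Longrightarrow> W b < W a"
    using w unfolding W_def by blast
  define g where "g t = gauss_val_term val n r t" for t
  define b where "b p = (if g (fst p) = g (snd p) then 1 else
      \<bar>g (fst p) - g (snd p)\<bar> / (\<bar>W (snd (fst p)) - W (snd (snd p))\<bar> + 1))" for p
  define m where "m = Min (insert 1 (b ` (T \<times> T)))"
  have bpos: "b p > 0" for p unfolding b_def by (auto intro!: divide_pos_pos)
  have fin: "finite (insert 1 (b ` (T \<times> T)))" using T by auto
  have mpos: "m > 0" unfolding m_def using fin bpos by (auto simp: Min_gr_iff)
  have mle: "m \<le> b p" if "p \<in> T \<times> T" for p unfolding m_def using fin that by (auto intro: Min_le)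
  define \<epsilon> where "\<epsilon> = m / 2"
  have epos: "\<epsilon> > 0" unfolding \<epsilon>_def using mpos by simp
  define s where "s i = r i + \<epsilon> * w i" for i
  have gs: "gauss_val_term val n s t = g t - \<epsilon> * W (snd t)" for t
    unfolding gauss_val_term_def g_def W_def s_def
    by (simp add: algebra_simps sum.distrib sum_distrib_left)
  have close: "\<epsilon> * \<bar>W (snd t1) - W (snd t2)\<bar> < \<bar>g t1 - g t2\<bar>"
    if "t1 \<in> T" "t2 \<in> T" "g t1 \<noteq> g t2" for t1 t2
  proof -
    have "\<epsilon> < b (t1, t2)" using mle[of "(t1,t2)"] that mpos unfolding \<epsilon>_def by simp
    then have "\<epsilon> < \<bar>g t1 - g t2\<bar> / (\<bar>W (snd t1) - W (snd t2)\<bar> + 1)"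
      using that unfolding b_def by simp
    then have "\<epsilon> * (\<bar>W (snd t1) - W (snd t2)\<bar> + 1) < \<bar>g t1 - g t2\<bar>"
      by (simp add: pos_less_divide_eq add_pos_nonneg)
    moreover have "\<epsilon> * \<bar>W (snd t1) - W (snd t2)\<bar> \<le> \<epsilon> * (\<bar>W (snd t1) - W (snd t2)\<bar> + 1)"
      using epos by simp
    ultimately show ?thesis by linarith
  qed
  have total: "\<forall>x\<in>monomials n. \<forall>y\<in>monomials n. le x y \<or> le y x"
    using mo unfolding monomial_order_def by blast
  have "term_less val n r le t2 t1 \<longleftrightarrow> gauss_val_term val n s t1 < gauss_val_term val n s t2"
    if t: "t1 \<in> T" "t2 \<in> T" for t1 t2
  proof (cases "g t1 = g t2")
    case True
    have "term_less val n r le t2 t1 \<longleftrightarrow> le (snd t2) (snd t1) \<and> snd t2 \<noteq> snd t1"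
      using True unfolding term_less_def g_def by auto
    also have "\<dots> \<longleftrightarrow> W (snd t2) < W (snd t1)"
    proof
      assume "le (snd t2) (snd t1) \<and> snd t2 \<noteq> snd t1"
      then show "W (snd t2) < W (snd t1)" using w' t by auto
    next
      assume lt: "W (snd t2) < W (snd t1)"
      then have ne: "snd t2 \<noteq> snd t1" by auto
      have "snd t1 \<in> monomials n" "snd t2 \<in> monomials n" using S t by auto
      then have "le (snd t2) (snd t1) \<or> le (snd t1) (snd t2)" using total by blast
      moreover have "\<not> (le (snd t1) (snd t2))"
        using w'[of "snd t2" "snd t1"] t ne lt by auto
      ultimately show "le (snd t2) (snd t1) \<and> snd t2 \<noteq> snd t1" using ne by blast
    qed
    also have "\<dots> \<longleftrightarrow> gauss_val_term val n s t1 < gauss_val_term val n s t2"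
      unfolding gs using True epos by auto
    finally show ?thesis .
  next
    case False
    have "term_less val n r le t2 t1 \<longleftrightarrow> g t1 < g t2"
      using False unfolding term_less_def g_def by auto
    moreover have c: "\<epsilon> * \<bar>W (snd t1) - W (snd t2)\<bar> < \<bar>g t1 - g t2\<bar>" using close t False by blast
    have "\<epsilon> * \<bar>W (snd t1) - W (snd t2)\<bar> = \<bar>\<epsilon> * W (snd t1) - \<epsilon> * W (snd t2)\<bar>"
      using epos by (simp add: abs_mult right_diff_distrib[symmetric])
    then have "\<bar>\<epsilon> * W (snd t1) - \<epsilon> * W (snd t2)\<bar> < \<bar>g t1 - g t2\<bar>" using c by simp
    then have "g t1 < g t2 \<longleftrightarrow> g t1 - \<epsilon> * W (snd t1) < g t2 - \<epsilon> * W (snd t2)"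
      by (auto simp: abs_if split: if_splits)
    ultimately show ?thesis unfolding gs by simp
  qed
  then show ?thesis by blast
qed


lemma per_f:
  assumes mo: "monomial_order n le" and f: "f \<in> polys n"
    and P: "\<forall>\<alpha>\<in>Poly_Mapping.keys f. \<forall>\<beta>\<in>Poly_Mapping.keys f.
      term_less val n r le (Poly_Mapping.lookup f \<beta>, \<beta>) (Poly_Mapping.lookup f \<alpha>, \<alpha>) \<longleftrightarrow>
      gauss_val_term val n s (Poly_Mapping.lookup f \<alpha>, \<alpha>) < gauss_val_term val n s (Poly_Mapping.lookup f \<beta>, \<beta>)"
  shows "leading_term val n s le f = leading_term val n r le f \<and> leading_term val n s le f = init_part val n s f"
proof (cases "f = 0")
  case True
  then show ?thesis by (simp add: leading_term_def init_part_def)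
next
  case False
  define K where "K = Poly_Mapping.keys f"
  define G where "G \<alpha> = gauss_val_term val n s (Poly_Mapping.lookup f \<alpha>, \<alpha>)" for \<alpha>
  have Kfin: "finite K" unfolding K_def by simp
  have Kne: "K \<noteq> {}" unfolding K_def using False by simp
  have Kmon: "K \<subseteq> monomials n" using f unfolding K_def polys_def by simp
  have gv: "gauss_val val n s f = Min (G ` K)" unfolding gauss_val_def G_def K_def by simp
  have "Min (G ` K) \<in> G ` K" using Kfin Kne by (intro Min_in) auto
  then obtain \<alpha>0 where a0: "\<alpha>0 \<in> K" "G \<alpha>0 = Min (G ` K)" by (metis imageE)
  have total: "\<forall>x\<in>monomials n. \<forall>y\<in>monomials n. le x y \<or> le y x"
    using mo unfolding monomial_order_def by blast
  have tot: "term_less val n r le (Poly_Mapping.lookup f \<beta>, \<beta>) (Poly_Mapping.lookup f \<alpha>, \<alpha>) \<or>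
             term_less val n r le (Poly_Mapping.lookup f \<alpha>, \<alpha>) (Poly_Mapping.lookup f \<beta>, \<beta>)"
    if "\<alpha> \<in> K" "\<beta> \<in> K" "\<alpha> \<noteq> \<beta>" for \<alpha> \<beta>
  proof -
    have "le \<alpha> \<beta> \<or> le \<beta> \<alpha>" using total that Kmon by blast
    then show ?thesis unfolding term_less_def using that by auto
  qed
  have strict: "G \<alpha>0 < G \<beta>" if "\<beta> \<in> K" "\<beta> \<noteq> \<alpha>0" for \<beta>
  proof -
    have "G \<alpha>0 \<le> G \<beta>" using a0 Kfin that by simp
    moreover have "G \<alpha>0 < G \<beta> \<or> G \<beta> < G \<alpha>0"
      using tot[of \<alpha>0 \<beta>] P that a0(1) unfolding G_def K_def by blast
    ultimately show ?thesis by linarith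
  qed
  have thes: "(THE \<alpha>. \<alpha> \<in> Poly_Mapping.keys f \<and>
                 (\<forall>\<beta>\<in>Poly_Mapping.keys f. \<beta> \<noteq> \<alpha> \<longrightarrow> term_less val n s le (Poly_Mapping.lookup f \<beta>, \<beta>) (Poly_Mapping.lookup f \<alpha>, \<alpha>))) = \<alpha>0"
  proof (rule the_equality)
    show "\<alpha>0 \<in> Poly_Mapping.keys f \<and>
      (\<forall>\<beta>\<in>Poly_Mapping.keys f. \<beta> \<noteq> \<alpha>0 \<longrightarrow> term_less val n s le (Poly_Mapping.lookup f \<beta>, \<beta>) (Poly_Mapping.lookup f \<alpha>0, \<alpha>0))"
      using a0(1) strict unfolding K_def G_def term_less_def by auto
  next
    fix \<alpha> assume H: "\<alpha> \<in> Poly_Mapping.keys f \<and>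
      (\<forall>\<beta>\<in>Poly_Mapping.keys f. \<beta> \<noteq> \<alpha> \<longrightarrow> term_less val n s le (Poly_Mapping.lookup f \<beta>, \<beta>) (Poly_Mapping.lookup f \<alpha>, \<alpha>))"
    show "\<alpha> = \<alpha>0"
    proof (rule ccontr)
      assume ne: "\<alpha> \<noteq> \<alpha>0"
      then have "term_less val n s le (Poly_Mapping.lookup f \<alpha>0, \<alpha>0) (Poly_Mapping.lookup f \<alpha>, \<alpha>)"
        using H a0(1) unfolding K_def by auto
      then have "G \<alpha> \<le> G \<alpha>0" unfolding term_less_def G_def by auto
      moreover have "G \<alpha>0 < G \<alpha>" using strict H ne unfolding K_def by auto
      ultimately show False by linarith
    qed
  qed
  have ther: "(THE \<alpha>. \<alpha> \<in> Poly_Mapping.keys f \<and>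
                 (\<forall>\<beta>\<in>Poly_Mapping.keys f. \<beta> \<noteq> \<alpha> \<longrightarrow> term_less val n r le (Poly_Mapping.lookup f \<beta>, \<beta>) (Poly_Mapping.lookup f \<alpha>, \<alpha>))) = \<alpha>0"
  proof (rule the_equality)
    show "\<alpha>0 \<in> Poly_Mapping.keys f \<and>
      (\<forall>\<beta>\<in>Poly_Mapping.keys f. \<beta> \<noteq> \<alpha>0 \<longrightarrow> term_less val n r le (Poly_Mapping.lookup f \<beta>, \<beta>) (Poly_Mapping.lookup f \<alpha>0, \<alpha>0))"
      using a0(1) strict P unfolding K_def G_def by auto
  next
    fix \<alpha> assume H: "\<alpha> \<in> Poly_Mapping.keys f \<and>
      (\<forall>\<beta>\<in>Poly_Mapping.keys f. \<beta> \<noteq> \<alpha> \<longrightarrow> term_less val n r le (Poly_Mapping.lookup f \<beta>, \<beta>) (Poly_Mapping.lookup f \<alpha>, \<alpha>))"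
    show "\<alpha> = \<alpha>0"
    proof (rule ccontr)
      assume ne: "\<alpha> \<noteq> \<alpha>0"
      then have "term_less val n r le (Poly_Mapping.lookup f \<alpha>0, \<alpha>0) (Poly_Mapping.lookup f \<alpha>, \<alpha>)"
        using H a0(1) unfolding K_def by auto
      then have "G \<alpha> < G \<alpha>0" using P H a0(1) unfolding K_def G_def by blast
      moreover have "G \<alpha>0 < G \<alpha>" using strict H ne unfolding K_def by auto
      ultimately show False by linarith
    qed
  qed
  have set: "{\<alpha>\<in>Poly_Mapping.keys f. gauss_val_term val n s (Poly_Mapping.lookup f \<alpha>, \<alpha>) = gauss_val val n s f} = {\<alpha>0}"
    using a0 strict unfolding gv K_def[symmetric] G_def[symmetric] by force
  have "leading_term val n s le f = Poly_Mapping.single \<alpha>0 (Poly_Mapping.lookup f \<alpha>0)"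
    unfolding leading_term_def Let_def thes using False by simp
  moreover have "leading_term val n r le f = Poly_Mapping.single \<alpha>0 (Poly_Mapping.lookup f \<alpha>0)"
    unfolding leading_term_def Let_def ther using False by simp
  moreover have "init_part val n s f = Poly_Mapping.single \<alpha>0 (Poly_Mapping.lookup f \<alpha>0)"
    unfolding init_part_def set by simp
  ultimately show ?thesis by simp
qed

theorem mainTheorem2:
  fixes val :: "'k::field \<Rightarrow> int"
    and n :: nat
    and r :: "nat \<Rightarrow> rat"
    and le :: "(nat \<Rightarrow>\<^sub>0 nat) \<Rightarrow> (nat \<Rightarrow>\<^sub>0 nat) \<Rightarrow> bool"
    and T :: "('k \<times> (nat \<Rightarrow>\<^sub>0 nat)) set"
    and F :: "((nat \<Rightarrow>\<^sub>0 nat) \<Rightarrow>\<^sub>0 'k) set"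
  assumes "discrete_valuation val"
    and "val_complete val"
    and "monomial_order n le"
    and "finite T" and "T \<subseteq> terms n"
    and "finite F" and "F \<subseteq> polys n"
  shows "(\<exists>s :: nat \<Rightarrow> rat. \<forall>t1\<in>T. \<forall>t2\<in>T.
            term_less val n r le t2 t1 \<longleftrightarrow> gauss_val_term val n s t1 < gauss_val_term val n s t2)
       \<and> (\<exists>s :: nat \<Rightarrow> rat.
            leading_term val n s le ` F = leading_term val n r le ` F \<and>
            (\<forall>f\<in>F. leading_term val n s le f = init_part val n s f))"
proof
  show "\<exists>s :: nat \<Rightarrow> rat. \<forall>t1\<in>T. \<forall>t2\<in>T.
            term_less val n r le t2 t1 \<longleftrightarrow> gauss_val_term val n s t1 < gauss_val_term val n s t2"
    using part1[OF assms(3,4,5)] by blast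
next
  define T' where "T' = (\<lambda>(f,\<alpha>). (Poly_Mapping.lookup f \<alpha>, \<alpha>)) ` (SIGMA f:F. Poly_Mapping.keys f)"
  have "finite T'" unfolding T'_def using assms(6) by auto
  moreover have "T' \<subseteq> terms n" unfolding T'_def terms_def
    using assms(7) by (auto simp: polys_def in_keys_iff)
  ultimately obtain s where s: "\<forall>t1\<in>T'. \<forall>t2\<in>T'.
      term_less val n r le t2 t1 \<longleftrightarrow> gauss_val_term val n s t1 < gauss_val_term val n s t2"
    using part1[OF assms(3)] by blast
  have key: "leading_term val n s le f = leading_term val n r le f \<and> leading_term val n s le f = init_part val n s f"
    if "f \<in> F" for f
  proof (rule per_f[OF assms(3)])
    show "f \<in> polys n" using that assms(7) by blast
    show "\<forall>\<alpha>\<in>Poly_Mapping.keys f. \<forall>\<beta>\<in>Poly_Mapping.keys f.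
      term_less val n r le (Poly_Mapping.lookup f \<beta>, \<beta>) (Poly_Mapping.lookup f \<alpha>, \<alpha>) \<longleftrightarrow>
      gauss_val_term val n s (Poly_Mapping.lookup f \<alpha>, \<alpha>) < gauss_val_term val n s (Poly_Mapping.lookup f \<beta>, \<beta>)"
    proof (intro ballI)
      fix \<alpha> \<beta> assume "\<alpha> \<in> Poly_Mapping.keys f" "\<beta> \<in> Poly_Mapping.keys f"
      then have "(Poly_Mapping.lookup f \<alpha>, \<alpha>) \<in> T'" "(Poly_Mapping.lookup f \<beta>, \<beta>) \<in> T'"
        unfolding T'_def using that by force+
      then show "term_less val n r le (Poly_Mapping.lookup f \<beta>, \<beta>) (Poly_Mapping.lookup f \<alpha>, \<alpha>) \<longleftrightarrow>
      gauss_val_term val n s (Poly_Mapping.lookup f \<alpha>, \<alpha>) < gauss_val_term val n s (Poly_Mapping.lookup f \<beta>, \<beta>)"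
        using s by blast
    qed
  qed
  have "leading_term val n s le ` F = leading_term val n r le ` F"
    using key by (intro image_cong) auto
  then show "\<exists>s :: nat \<Rightarrow> rat.
            leading_term val n s le ` F = leading_term val n r le ` F \<and>
            (\<forall>f\<in>F. leading_term val n s le f = init_part val n s f)"
    using key by blast
qed

end
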